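(* Let $d,k\in\mathbb{N}$ and $R=\mathbb{R}\langle s^{(1)},\dots,s^{(k-1)}\rangle$. The exponential $\exp:\mathfrak{g}_{d,k}\to\mathcal{G}_{d,k}$ and the logarithm $\log:\mathcal{G}_{d,k}\to\mathfrak{g}_{d,k}$ are each represented by an element of $s^{(k)}+R$, while the group inversion $\mathcal{G}_{d,k}\to\mathcal{G}_{d,k}$, $\mathbf{z}\mapsto\mathbf{z}^{-1}$, is represented by an element of $-s^{(k)}+R$.
   Context: $T_{d,k}=\bigoplus_{\ell=0}^k(\mathbb{R}^d)^{\otimes\ell}$ is the truncated tensor algebra (elements $\mathbf{z}=\mathbf{z}^{(0)}\oplus\dots\oplus\mathbf{z}^{(k)}$) with product the bilinear extension of the tensor product of levels, set to $0$ when the total level exceeds $k$. $\mathfrak{g}_{d,k}$ is the smallest Lie subalgebra (commutator bracket) of $T_{d,k}$ containing $e_1,\dots,e_d\in\mathbb{R}^d$; $\exp(\mathbf{z})=\sum_{\ell=0}^k\mathbf{z}^{\otimes\ell}/\ell!$; $\mathcal{G}_{d,k}=\exp(\mathfrak{g}_{d,k})$, a group; $\log(\mathbf{s})=\sum_{\ell\ge1}\frac{(-1)^{\ell+1}}{\ell}(\mathbf{s}-1)^{\otimes\ell}$. $\mathbb{R}\langle s^{(1)},\dots,s^{(k)}\rangle$ is the free associative $\mathbb{R}$-algebra on non-commuting variables $s^{(1)},\dots,s^{(k)}$ (constants included). For $f$ in it, $\mathrm{eval}_f:T_{d,k}\to T_{d,k}$ is obtained by substituting $\mathbf{z}^{(i)}$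 (viewed in $T_{d,k}$) for $s^{(i)}$ and computing in $T_{d,k}$, with constants mapped to multiples of the unit $1$. A map $\phi$ defined on a subset of $T_{d,k}$ is represented by $f$ if $\phi=\mathrm{eval}_f$ on that subset. *)

theory Defs
  imports Complex_Main
begin

text \<open>A tensor of level l over R^d is a real function
on words (lists) of length l over the alphabet {0..<d}; an element of T_{d,k} is a
function on words, vanishing outside words of length at most k over {0..<d}.\<close>

definition tens :: "nat \<Rightarrow> nat \<Rightarrow> (nat list \<Rightarrow> real) set" where
  "tens d k = {z. \<forall>w. z w \<noteq> 0 \<longrightarrow> length w \<le> k \<and> set w \<subseteq> {..<d}}"

definition tone :: "nat list \<Rightarrow> real" where
  "tone = (\<lambda>w. if w = [] then 1 else 0)"

definition tadd :: "(nat list \<Rightarrow> real) \<Rightarrow> (nat list \<Rightarrow> real) \<Rightarrow> nat list \<Rightarrow> real" where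
  "tadd x y = (\<lambda>w. x w + y w)"

definition tscale :: "real \<Rightarrow> (nat list \<Rightarrow> real) \<Rightarrow> nat list \<Rightarrow> real" where
  "tscale c x = (\<lambda>w. c * x w)"

definition tmul :: "nat \<Rightarrow> (nat list \<Rightarrow> real) \<Rightarrow> (nat list \<Rightarrow> real) \<Rightarrow> nat list \<Rightarrow> real" where
  "tmul k x y = (\<lambda>w. if length w \<le> k
      then (\<Sum>i\<le>length w. x (take i w) * y (drop i w)) else 0)"

definition tbracket :: "nat \<Rightarrow> (nat list \<Rightarrow> real) \<Rightarrow> (nat list \<Rightarrow> real) \<Rightarrow> nat list \<Rightarrow> real" where
  "tbracket k x y = (\<lambda>w. tmul k x y w - tmul k y x w)"

definition tbasis :: "nat \<Rightarrow> nat list \<Rightarrow> real" where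
  "tbasis i = (\<lambda>w. if w = [i] then 1 else 0)"

inductive_set lie_alg :: "nat \<Rightarrow> nat \<Rightarrow> (nat list \<Rightarrow> real) set" for d k where
  gen: "i < d \<Longrightarrow> tbasis i \<in> lie_alg d k"
| zero: "(\<lambda>w. 0) \<in> lie_alg d k"
| add: "x \<in> lie_alg d k \<Longrightarrow> y \<in> lie_alg d k \<Longrightarrow> tadd x y \<in> lie_alg d k"
| scale: "x \<in> lie_alg d k \<Longrightarrow> tscale c x \<in> lie_alg d k"
| bracket: "x \<in> lie_alg d k \<Longrightarrow> y \<in> lie_alg d k \<Longrightarrow> tbracket k x y \<in> lie_alg d k"

primrec tpow :: "nat \<Rightarrow> (nat list \<Rightarrow> real) \<Rightarrow> nat \<Rightarrow> nat list \<Rightarrow> real" where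
  "tpow k z 0 = tone"
| "tpow k z (Suc n) = tmul k z (tpow k z n)"

definition texp :: "nat \<Rightarrow> (nat list \<Rightarrow> real) \<Rightarrow> nat list \<Rightarrow> real" where
  "texp k z = (\<lambda>w. \<Sum>l\<le>k. tpow k z l w / fact l)"

text \<open>Logarithm; on G_{d,k} the level-0 part of s - 1 vanishes, so terms with l > k are 0.\<close>
definition tlog :: "nat \<Rightarrow> (nat list \<Rightarrow> real) \<Rightarrow> nat list \<Rightarrow> real" where
  "tlog k s = (\<lambda>w. \<Sum>l\<in>{1..k}. ((-1) ^ (l + 1) / real l) * tpow k (\<lambda>v. s v - tone v) l w)"

definition group_G :: "nat \<Rightarrow> nat \<Rightarrow> (nat list \<Rightarrow> real) set" where
  "group_G d k = texp k ` lie_alg d k"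

definition tinv :: "nat \<Rightarrow> nat \<Rightarrow> (nat list \<Rightarrow> real) \<Rightarrow> nat list \<Rightarrow> real" where
  "tinv d k z = (THE y. y \<in> tens d k \<and> tmul k z y = tone \<and> tmul k y z = tone)"

text \<open>Free associative algebra R<s^(1),...,s^(m)>: finitely supported real functions on
words (lists) over {1..m}; the word [i1,...,ir] is the monomial s^(i1)...s^(ir),
the empty word is the constant 1.\<close>
definition free_alg :: "nat \<Rightarrow> (nat list \<Rightarrow> real) set" where
  "free_alg m = {f. finite {w. f w \<noteq> 0} \<and> (\<forall>w. f w \<noteq> 0 \<longrightarrow> set w \<subseteq> {1..m})}"

definition svar :: "nat \<Rightarrow> nat list \<Rightarrow> real" where
  "svar i = (\<lambda>w. if w = [i] then 1 else 0)"

definition tproj :: "nat \<Rightarrow> (nat list \<Rightarrow> real) \<Rightarrow> nat list \<Rightarrow> real" where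
  "tproj i z = (\<lambda>w. if length w = i then z w else 0)"

definition meval :: "nat \<Rightarrow> nat list \<Rightarrow> (nat list \<Rightarrow> real) \<Rightarrow> nat list \<Rightarrow> real" where
  "meval k u z = foldr (\<lambda>i acc. tmul k (tproj i z) acc) u tone"

definition eval_poly :: "nat \<Rightarrow> (nat list \<Rightarrow> real) \<Rightarrow> (nat list \<Rightarrow> real) \<Rightarrow> nat list \<Rightarrow> real" where
  "eval_poly k f z = (\<lambda>v. \<Sum>u\<in>{u. f u \<noteq> 0}. f u * meval k u z v)"

end

theory Submission imports Defs begin

lemma tmul_nz:
  assumes "tmul k x y w \<noteq> 0"
  shows "length w \<le> k \<and> (\<exists>i\<le>length w. x (take i w) \<noteq> 0 \<and> y (drop i w) \<noteq> 0)"
proof -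
  have le: "length w \<le> k" using assms by (auto simp: tmul_def split: if_splits)
  then have "(\<Sum>i\<le>length w. x (take i w) * y (drop i w)) \<noteq> 0" using assms by (simp add: tmul_def)
  then obtain i where "i \<le> length w" "x (take i w) * y (drop i w) \<noteq> 0"
    by (meson atMost_iff sum.not_neutral_contains_not_neutral)
  then show ?thesis using le by auto
qed

lemma tmul_sum_left:
  "tmul k (\<lambda>w. \<Sum>i\<in>I. c i * f i w) y = (\<lambda>w. \<Sum>i\<in>I. c i * tmul k (f i) y w)"
  by (auto simp: tmul_def sum_distrib_left sum_distrib_right mult.assoc intro!: ext sum.swap)

lemma tmul_sum_right:
  "tmul k y (\<lambda>w. \<Sum>i\<in>I. c i * f i w) = (\<lambda>w. \<Sum>i\<in>I. c i * tmul k y (f i) w)"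
  by (auto simp: tmul_def sum_distrib_left sum_distrib_right mult.assoc mult.left_commute intro!: ext sum.swap)

lemma tmul_add_left:
  "tmul k (\<lambda>w. x w + x' w) y = (\<lambda>w. tmul k x y w + tmul k x' y w)"
  by (auto simp: tmul_def sum.distrib algebra_simps intro!: ext)

lemma tmul_add_right:
  "tmul k y (\<lambda>w. x w + x' w) = (\<lambda>w. tmul k y x w + tmul k y x' w)"
  by (auto simp: tmul_def sum.distrib algebra_simps intro!: ext)

definition trunc :: "nat \<Rightarrow> (nat list \<Rightarrow> real) \<Rightarrow> bool" where
  "trunc k x \<longleftrightarrow> (\<forall>w. k < length w \<longrightarrow> x w = 0)"

lemma tmul_tone_left: "trunc k y \<Longrightarrow> tmul k tone y = y"
proof (rule ext)
  fix w assume t: "trunc k y"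
  show "tmul k tone y w = y w"
  proof (cases "length w \<le> k")
    case True
    have "(\<Sum>i\<le>length w. tone (take i w) * y (drop i w)) = (\<Sum>i\<in>{0}. tone (take i w) * y (drop i w))"
      by (rule sum.mono_neutral_right) (auto simp: tone_def)
    then show ?thesis using True by (simp add: tmul_def tone_def)
  next
    case False then show ?thesis using t by (simp add: tmul_def trunc_def)
  qed
qed

lemma tmul_tone_right: "trunc k y \<Longrightarrow> tmul k y tone = y"
proof (rule ext)
  fix w assume t: "trunc k y"
  show "tmul k y tone w = y w"
  proof (cases "length w \<le> k")
    case True
    have "(\<Sum>i\<le>length w. y (take i w) * tone (drop i w)) = (\<Sum>i\<in>{length w}. y (take i w) * tone (drop i w))"
      by (rule sum.mono_neutral_right) (auto simp: tone_def)
    then show ?thesis using True by (simp add: tmul_def tone_def)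
  next
    case False then show ?thesis using t by (simp add: tmul_def trunc_def)
  qed
qed

lemma trunc_tmul: "trunc k (tmul k x y)"
  by (simp add: trunc_def tmul_def)

lemma tmul_assoc: "tmul k (tmul k x y) z = tmul k x (tmul k y z)"
proof (rule ext)
  fix w
  show "tmul k (tmul k x y) z w = tmul k x (tmul k y z) w"
  proof (cases "length w \<le> k")
    case False then show ?thesis by (simp add: tmul_def)
  next
    case True
    define n where "n = length w"
    define F where "F i j = x (take i w) * y (take (j-i) (drop i w)) * z (drop j w)" for i j
    have L: "tmul k (tmul k x y) z w = (\<Sum>j\<le>n. \<Sum>i\<le>j. F i j)"
    proof -
      have "tmul k (tmul k x y) z w = (\<Sum>j\<le>n. tmul k x y (take j w) * z (drop j w))"
        using True by (simp add: tmul_def n_def)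
      also have "\<dots> = (\<Sum>j\<le>n. \<Sum>i\<le>j. F i j)"
      proof (rule sum.cong[OF refl])
        fix j assume "j \<in> {..n}"
        then have j: "j \<le> n" by simp
        have "tmul k x y (take j w) = (\<Sum>i\<le>j. x (take i w) * y (take (j-i) (drop i w)))"
          using j True by (auto simp: tmul_def n_def min_def drop_take intro!: sum.cong)
        then show "tmul k x y (take j w) * z (drop j w) = (\<Sum>i\<le>j. F i j)"
          by (simp add: F_def sum_distrib_right)
      qed
      finally show ?thesis .
    qed
    have R: "tmul k x (tmul k y z) w = (\<Sum>i\<le>n. \<Sum>m\<le>n-i. F i (i+m))"
    proof -
      have "tmul k x (tmul k y z) w = (\<Sum>i\<le>n. x (take i w) * tmul k y z (drop i w))"
        using True by (simp add: tmul_def n_def)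
      also have "\<dots> = (\<Sum>i\<le>n. \<Sum>m\<le>n-i. F i (i+m))"
      proof (rule sum.cong[OF refl])
        fix i assume "i \<in> {..n}"
        have "tmul k y z (drop i w) = (\<Sum>m\<le>n-i. y (take m (drop i w)) * z (drop (i+m) w))"
          using True by (auto simp: tmul_def n_def add.commute)
        then show "x (take i w) * tmul k y z (drop i w) = (\<Sum>m\<le>n-i. F i (i+m))"
          by (simp add: F_def sum_distrib_left mult.assoc)
      qed
      finally show ?thesis .
    qed
    have "(\<Sum>i\<le>n. \<Sum>m\<le>n-i. F i (i+m)) = (\<Sum>(i,m)\<in>{(i,m). i+m \<le> n}. F i (i+m))"
    proof -
      have e: "{(i,m). i+m \<le> n} = Sigma {..n} (\<lambda>i. {..n-i})" by auto
      show ?thesis unfolding e by (simp add: sum.Sigma)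
    qed
    also have "\<dots> = (\<Sum>j\<le>n. \<Sum>i\<le>j. F i (i + (j - i)))"
      by (rule sum.triangle_reindex_eq)
    also have "\<dots> = (\<Sum>j\<le>n. \<Sum>i\<le>j. F i j)"
      by (auto intro!: sum.cong)
    finally show ?thesis using L R by simp
  qed
qed


lemma tens_trunc: "x \<in> tens d k \<Longrightarrow> trunc k x"
  by (force simp: tens_def trunc_def)

lemma tone_tens: "tone \<in> tens d k"
  by (auto simp: tens_def tone_def split: if_splits)

lemma tmul_tens: "x \<in> tens d k \<Longrightarrow> y \<in> tens d k \<Longrightarrow> tmul k x y \<in> tens d k"
proof -
  assume x: "x \<in> tens d k" and y: "y \<in> tens d k"
  show ?thesis unfolding tens_def
  proof (intro CollectI allI impI)
    fix w assume "tmul k x y w \<noteq> 0"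
    from tmul_nz[OF this] obtain i where "length w \<le> k" "x (take i w) \<noteq> 0" "y (drop i w) \<noteq> 0" by blast
    then have "set (take i w) \<subseteq> {..<d}" "set (drop i w) \<subseteq> {..<d}" using x y by (auto simp: tens_def)
    then have "set w \<subseteq> {..<d}" by (metis append_take_drop_id set_append Un_subset_iff)
    then show "length w \<le> k \<and> set w \<subseteq> {..<d}" using \<open>length w \<le> k\<close> by simp
  qed
qed

lemma sum_tens: "(\<And>i. i \<in> I \<Longrightarrow> f i \<in> tens d k) \<Longrightarrow> (\<lambda>w. \<Sum>i\<in>I. c i * f i w) \<in> tens d k"
proof -
  assume a: "\<And>i. i \<in> I \<Longrightarrow> f i \<in> tens d k"
  show ?thesis unfolding tens_def
  proof (intro CollectI allI impI)
    fix w assume "(\<Sum>i\<in>I. c i * f i w) \<noteq> 0"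
    then obtain i where "i \<in> I" "c i * f i w \<noteq> 0" by (meson sum.not_neutral_contains_not_neutral)
    then show "length w \<le> k \<and> set w \<subseteq> {..<d}" using a[of i] by (auto simp: tens_def)
  qed
qed

lemma tpow_tens: "x \<in> tens d k \<Longrightarrow> tpow k x l \<in> tens d k"
  by (induction l) (auto simp: tone_tens tmul_tens)

lemma tmul_Nil: "tmul k x y [] = x [] * y []"
  by (simp add: tmul_def)

lemma lin_tens: "x \<in> tens d k \<Longrightarrow> y \<in> tens d k \<Longrightarrow> (\<lambda>w. a * x w + b * y w) \<in> tens d k"
proof -
  assume x: "x \<in> tens d k" and y: "y \<in> tens d k"
  show ?thesis unfolding tens_def
  proof (intro CollectI allI impI)
    fix w assume "a * x w + b * y w \<noteq> 0"
    then have "x w \<noteq> 0 \<or> y w \<noteq> 0" by auto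
    then show "length w \<le> k \<and> set w \<subseteq> {..<d}" using x y unfolding tens_def by blast
  qed
qed

lemma lie_props: "z \<in> lie_alg d k \<Longrightarrow> k \<ge> 1 \<Longrightarrow> z \<in> tens d k \<and> z [] = 0"
proof (induction rule: lie_alg.induct)
  case (gen i) then show ?case by (auto simp: tens_def tbasis_def split: if_splits)
next
  case zero then show ?case by (auto simp: tens_def)
next
  case (add x y)
  have "(\<lambda>w. 1 * x w + 1 * y w) \<in> tens d k" using add by (intro lin_tens) auto
  then show ?case using add by (simp add: tadd_def)
next
  case (scale x c)
  have "(\<lambda>w. c * x w + 0 * x w) \<in> tens d k" using scale by (intro lin_tens) auto
  then show ?case using scale by (simp add: tscale_def)
next
  case (bracket x y)
  have "tmul k x y \<in> tens d k" "tmul k y x \<in> tens d k" using bracket by (auto intro: tmul_tens)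
  then have "(\<lambda>w. 1 * tmul k x y w + (-1) * tmul k y x w) \<in> tens d k" by (intro lin_tens)
  then have "tbracket k x y \<in> tens d k" by (simp add: tbracket_def)
  then show ?case using bracket by (simp add: tbracket_def tmul_Nil)
qed

lemma tpow_nil: "x [] = 0 \<Longrightarrow> tpow k x l w \<noteq> 0 \<Longrightarrow> l \<le> length w"
proof (induction l arbitrary: w)
  case 0 then show ?case by simp
next
  case (Suc l)
  from tmul_nz[of k x "tpow k x l" w] Suc.prems obtain i where
    i: "i \<le> length w" "x (take i w) \<noteq> 0" "tpow k x l (drop i w) \<noteq> 0" by auto
  have "i \<noteq> 0"
  proof
    assume "i = 0" then show False using i(2) Suc.prems(1) by simp
  qed
  moreover have "l \<le> length (drop i w)" using Suc.IH[OF Suc.prems(1) i(3)] .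
  ultimately show ?case using i by auto
qed

lemma tpow_nilpotent: "x [] = 0 \<Longrightarrow> tpow k x (Suc k) = (\<lambda>w. 0)"
proof (rule ext, rule ccontr)
  fix w assume x: "x [] = 0" and "tpow k x (Suc k) w \<noteq> 0"
  then have "Suc k \<le> length w" using tpow_nil by blast
  moreover have "length w \<le> k" using tmul_nz \<open>tpow k x (Suc k) w \<noteq> 0\<close> by (metis tpow.simps(2))
  ultimately show False by simp
qed

lemma tpow_Nil: "x [] = 0 \<Longrightarrow> tpow k x l [] = (if l = 0 then 1 else 0)"
  by (cases l) (auto simp: tone_def tmul_Nil)

lemma trunc_tpow: "trunc k x \<Longrightarrow> trunc k (tpow k x l)"
  by (cases l) (auto simp: trunc_def tone_def tmul_def)

lemma tpow_comm: "trunc k x \<Longrightarrow> tmul k (tpow k x l) x = tpow k x (Suc l)"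
proof (induction l)
  case 0 then show ?case by (simp add: tmul_tone_left tmul_tone_right)
next
  case (Suc l) then show ?case by (simp add: tmul_assoc)
qed

definition P :: "nat \<Rightarrow> (nat list \<Rightarrow> real) \<Rightarrow> nat list \<Rightarrow> real" where
  "P k z = (\<lambda>w. \<Sum>i\<in>{1..k}. 1 * tproj i z w)"

lemma P_eq: "P k z = (\<lambda>w. if 1 \<le> length w \<and> length w \<le> k then z w else 0)"
proof (rule ext)
  fix w
  show "P k z w = (if 1 \<le> length w \<and> length w \<le> k then z w else 0)"
  proof (cases "1 \<le> length w \<and> length w \<le> k")
    case True
    have "P k z w = (\<Sum>i\<in>{1..k}. tproj i z w)" by (simp add: P_def)
    also have "\<dots> = (\<Sum>i\<in>{length w}. tproj i z w)"
      using True by (intro sum.mono_neutral_right) (auto simp: tproj_def)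
    finally show ?thesis using True by (simp add: tproj_def)
  next
    case False
    then show ?thesis unfolding P_def by (auto simp: tproj_def intro!: sum.neutral)
  qed
qed

definition W :: "nat \<Rightarrow> nat \<Rightarrow> nat list set" where
  "W k l = {u. set u \<subseteq> {1..k} \<and> length u = l}"

lemma finite_W: "finite (W k l)"
  unfolding W_def by (rule finite_lists_length_eq) simp

lemma meval_Cons: "meval k (i # u) z = tmul k (tproj i z) (meval k u z)"
  by (simp add: meval_def)

lemma expand: "tpow k (P k z) l = (\<lambda>w. \<Sum>u\<in>W k l. 1 * meval k u z w)"
proof (induction l)
  case 0
  have "W k 0 = {[]}" by (auto simp: W_def)
  then show ?case by (simp add: meval_def)
next
  case (Suc l)
  have "tpow k (P k z) (Suc l) = tmul k (P k z) (\<lambda>w. \<Sum>u\<in>W k l. 1 * meval k u z w)"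
    using Suc by simp
  also have "\<dots> = (\<lambda>w. \<Sum>i\<in>{1..k}. \<Sum>u\<in>W k l. 1 * meval k (i # u) z w)"
    unfolding P_def tmul_sum_left tmul_sum_right meval_Cons by simp
  also have "\<dots> = (\<lambda>w. \<Sum>u\<in>W k (Suc l). 1 * meval k u z w)"
  proof (rule ext)
    fix w
    have "(\<Sum>u\<in>W k (Suc l). 1 * meval k u z w) = (\<Sum>p\<in>W k l \<times> {1..k}. 1 * meval k ((\<lambda>(xs, n). n#xs) p) z w)"
      unfolding W_def lists_length_Suc_eq
      by (subst sum.reindex) (auto simp: inj_on_def)
    also have "\<dots> = (\<Sum>u\<in>W k l. \<Sum>i\<in>{1..k}. 1 * meval k (i # u) z w)"
      by (simp add: sum.cartesian_product split_beta)
    also have "\<dots> = (\<Sum>i\<in>{1..k}. \<Sum>u\<in>W k l. 1 * meval k (i # u) z w)"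
      by (rule sum.swap)
    finally show "(\<Sum>i\<in>{1..k}. \<Sum>u\<in>W k l. 1 * meval k (i # u) z w) = (\<Sum>u\<in>W k (Suc l). 1 * meval k u z w)" by simp
  qed
  finally show ?case .
qed

lemma meval_supp: "meval k u z w \<noteq> 0 \<Longrightarrow> length w = sum_list u \<and> (u \<noteq> [] \<longrightarrow> length w \<le> k)"
proof (induction u arbitrary: w)
  case Nil then show ?case by (simp add: meval_def tone_def split: if_splits)
next
  case (Cons i u)
  from tmul_nz[of k "tproj i z" "meval k u z" w] Cons.prems obtain j where
    j: "length w \<le> k" "j \<le> length w" "tproj i z (take j w) \<noteq> 0" "meval k u z (drop j w) \<noteq> 0"
    by (auto simp: meval_Cons)
  have "length (take j w) = i" using j(3) by (simp add: tproj_def split: if_splits)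
  moreover have "length (drop j w) = sum_list u" using Cons.IH[OF j(4)] by simp
  ultimately show ?case using j by auto
qed

lemma sum_list_ge_len: "set u \<subseteq> {1..} \<Longrightarrow> length u \<le> sum_list u"
  by (induction u) auto

lemma sum_list_mem: "set u \<subseteq> {1..} \<Longrightarrow> k \<in> set u \<Longrightarrow> k + length u \<le> Suc (sum_list u)"
proof (induction u)
  case Nil then show ?case by simp
next
  case (Cons a u)
  show ?case
  proof (cases "a = k")
    case True then show ?thesis using sum_list_ge_len[of u] Cons.prems by auto
  next
    case False then show ?thesis using Cons by auto
  qed
qed


definition gpoly :: "nat \<Rightarrow> (nat \<Rightarrow> real) \<Rightarrow> nat list \<Rightarrow> real" where
  "gpoly k c u = (if set u \<subseteq> {1..k-1} \<and> length u \<le> k then c (length u) else 0)"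

lemma gpoly_free: "gpoly k c \<in> free_alg (k-1)"
proof -
  have "{w. gpoly k c w \<noteq> 0} \<subseteq> {xs. set xs \<subseteq> {1..k-1} \<and> length xs \<le> k}"
    by (auto simp: gpoly_def split: if_splits)
  then have "finite {w. gpoly k c w \<noteq> 0}"
    by (rule finite_subset) (rule finite_lists_length_le, simp)
  then show ?thesis by (auto simp: free_alg_def gpoly_def split: if_splits)
qed

lemma eval_generic:
  assumes k: "k \<ge> 1" and c1: "c 1 = \<sigma>" and f: "\<And>u. f u = \<sigma> * svar k u + gpoly k c u"
  shows "eval_poly k f z = (\<lambda>w. \<Sum>l\<le>k. c l * tpow k (P k z) l w)"
proof (rule ext)
  fix w
  define S where "S = {u. set u \<subseteq> {1..k} \<and> length u \<le> k}"
  have finS: "finite S" unfolding S_def by (rule finite_lists_length_le) simp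
  have supp: "{u. f u \<noteq> 0} \<subseteq> S"
    using k by (auto simp: S_def f svar_def gpoly_def split: if_splits) force+
  have "eval_poly k f z w = (\<Sum>u\<in>S. f u * meval k u z w)"
    unfolding eval_poly_def by (rule sum.mono_neutral_left[OF finS supp]) auto
  also have "\<dots> = (\<Sum>u\<in>S. c (length u) * meval k u z w)"
  proof (rule sum.cong[OF refl])
    fix u assume uS: "u \<in> S"
    show "f u * meval k u z w = c (length u) * meval k u z w"
    proof (cases "k \<in> set u")
      case True
      show ?thesis
      proof (cases "u = [k]")
        case True
        have "\<not> k \<le> k - 1" using k by simp
        then show ?thesis using True k c1 by (simp add: f svar_def gpoly_def)
      next
        case False
        have "length u \<noteq> 1" using False \<open>k \<in> set u\<close> by (auto simp: length_Suc_conv)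
        then have "length u \<ge> 2" using \<open>k \<in> set u\<close> by (cases u) (auto simp: Suc_le_eq)
        have "meval k u z w = 0"
        proof (rule ccontr)
          assume "meval k u z w \<noteq> 0"
          from meval_supp[OF this] have "length w = sum_list u" "length w \<le> k" using \<open>k \<in> set u\<close> by auto
          moreover have "set u \<subseteq> {1..}" using uS by (auto simp: S_def)
          then have "k + length u \<le> Suc (sum_list u)"
            using sum_list_mem[of u k] True by blast
          ultimately show False using \<open>length u \<ge> 2\<close> by simp
        qed
        then show ?thesis by simp
      qed
    next
      case False
      then have "set u \<subseteq> {1..k-1}" using uS unfolding S_def
      proof (intro subsetI)
        fix x assume "x \<in> set u" "u \<in> {u. set u \<subseteq> {1..k} \<and> length u \<le> k}"
        then have "1 \<le> x" "x \<le> k" "x \<noteq> k" using False by auto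
        then show "x \<in> {1..k-1}" by simp
      qed
      moreover have "u \<noteq> [k]" using False by auto
      ultimately show ?thesis using uS by (simp add: f svar_def gpoly_def S_def)
    qed
  qed
  also have "\<dots> = (\<Sum>l\<le>k. \<Sum>u\<in>{x\<in>S. length x = l}. c (length u) * meval k u z w)"
    by (rule sum.group[symmetric]) (use finS in \<open>auto simp: S_def\<close>)
  also have "\<dots> = (\<Sum>l\<le>k. c l * (\<Sum>u\<in>W k l. 1 * meval k u z w))"
  proof (rule sum.cong[OF refl])
    fix l assume "l \<in> {..k}"
    then have "{x\<in>S. length x = l} = W k l" by (auto simp: S_def W_def)
    then show "(\<Sum>u\<in>{x\<in>S. length x = l}. c (length u) * meval k u z w) = c l * (\<Sum>u\<in>W k l. 1 * meval k u z w)"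
      by (simp add: sum_distrib_left W_def)
  qed
  also have "\<dots> = (\<Sum>l\<le>k. c l * tpow k (P k z) l w)"
    by (simp add: expand)
  finally show "eval_poly k f z w = (\<Sum>l\<le>k. c l * tpow k (P k z) l w)" .
qed

lemma texp_alt: "texp k z = (\<lambda>w. \<Sum>l\<le>k. (1 / fact l) * tpow k z l w)"
  by (simp add: texp_def)

lemma texp_props:
  assumes "z \<in> lie_alg d k" "k \<ge> 1"
  shows "texp k z \<in> tens d k \<and> texp k z [] = 1"
proof
  have z: "z \<in> tens d k" "z [] = 0" using lie_props[OF assms] by auto
  show "texp k z \<in> tens d k" unfolding texp_alt by (intro sum_tens tpow_tens z)
  have "texp k z [] = (\<Sum>l\<le>k. (1 / fact l) * (if l = 0 then 1 else 0))"
    unfolding texp_alt using tpow_Nil[of z k, OF z(2)] by simp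
  also have "\<dots> = (\<Sum>l\<in>{0}. (1 / fact l) * (if l = 0 then 1 else (0::real)))"
    by (rule sum.mono_neutral_right) auto
  finally show "texp k z [] = 1" by simp
qed

lemma telescope:
  fixes b :: "nat \<Rightarrow> real"
  shows "(\<Sum>l\<le>k. (-1)^l * b l) + (\<Sum>l\<le>k. (-1)^l * b (Suc l)) = b 0 + (-1)^k * b (Suc k)"
  by (induction k) (auto simp: algebra_simps)


lemma G_props:
  assumes "s \<in> group_G d k" "k \<ge> 1"
  shows "s \<in> tens d k" "s [] = 1" "P k s = (\<lambda>v. s v - tone v)"
proof -
  obtain z where z: "z \<in> lie_alg d k" "s = texp k z" using assms(1) by (auto simp: group_G_def)
  show s1: "s \<in> tens d k" "s [] = 1" using texp_props[OF z(1) assms(2)] z(2) by auto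
  have t: "trunc k s" using tens_trunc[OF s1(1)] .
  show "P k s = (\<lambda>v. s v - tone v)"
  proof (rule ext)
    fix v show "P k s v = s v - tone v"
      using t s1(2) unfolding P_eq trunc_def tone_def by (cases v) auto
  qed
qed

lemma part1:
  assumes k: "k \<ge> 1"
  shows "\<exists>g \<in> free_alg (k - 1). \<forall>z \<in> lie_alg d k.
            eval_poly k (\<lambda>u. svar k u + g u) z = texp k z"
proof (intro bexI ballI)
  fix z assume z: "z \<in> lie_alg d k"
  have zz: "z \<in> tens d k" "z [] = 0" using lie_props[OF z k] by auto
  have Pz: "P k z = z"
  proof (rule ext)
    fix v show "P k z v = z v"
      using tens_trunc[OF zz(1)] zz(2) unfolding P_eq trunc_def by (cases v) auto
  qed
  have "eval_poly k (\<lambda>u. svar k u + gpoly k (\<lambda>l. 1 / fact l) u) z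
        = (\<lambda>w. \<Sum>l\<le>k. (1 / fact l) * tpow k (P k z) l w)"
    by (rule eval_generic[OF k, where \<sigma>=1]) auto
  also have "\<dots> = texp k z" by (simp add: Pz texp_def)
  finally show "eval_poly k (\<lambda>u. svar k u + gpoly k (\<lambda>l. 1 / fact l) u) z = texp k z" .
qed (rule gpoly_free)

lemma part2:
  assumes k: "k \<ge> 1"
  shows "\<exists>g \<in> free_alg (k - 1). \<forall>s \<in> group_G d k.
            eval_poly k (\<lambda>u. svar k u + g u) s = tlog k s"
proof (intro bexI ballI)
  fix s assume s: "s \<in> group_G d k"
  define c where "c l = (if l = 0 then 0 else (-1) ^ (l + 1) / real l)" for l
  have "eval_poly k (\<lambda>u. svar k u + gpoly k c u) s
        = (\<lambda>w. \<Sum>l\<le>k. c l * tpow k (P k s) l w)"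
    by (rule eval_generic[OF k, where \<sigma>=1]) (simp add: c_def, simp)
  also have "\<dots> = tlog k s"
  proof (rule ext)
    fix w
    have "(\<Sum>l\<le>k. c l * tpow k (P k s) l w) = (\<Sum>l\<in>{1..k}. c l * tpow k (P k s) l w)"
      by (rule sum.mono_neutral_right) (auto simp: c_def)
    then show "(\<Sum>l\<le>k. c l * tpow k (P k s) l w) = tlog k s w"
      by (simp add: tlog_def G_props[OF s k] c_def)
  qed
  finally show "eval_poly k (\<lambda>u. svar k u + gpoly k c u) s = tlog k s" .
qed (rule gpoly_free)

lemma part3:
  assumes k: "k \<ge> 1"
  shows "\<exists>g \<in> free_alg (k - 1). \<forall>z \<in> group_G d k.
            eval_poly k (\<lambda>u. - svar k u + g u) z = tinv d k z"
proof (intro bexI ballI)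
  fix s assume s: "s \<in> group_G d k"
  define a where "a = P k s"
  have a: "a = (\<lambda>v. s v - tone v)" using G_props[OF s k] a_def by simp
  have stens: "s \<in> tens d k" and s0: "s [] = 1" using G_props[OF s k] by auto
  have atens: "a \<in> tens d k"
  proof -
    have "(\<lambda>v. 1 * s v + (-1) * tone v) \<in> tens d k" by (intro lin_tens stens tone_tens)
    then show ?thesis by (simp add: a)
  qed
  have a0: "a [] = 0" using s0 by (simp add: a tone_def)
  have at: "trunc k a" using tens_trunc[OF atens] .
  define y where "y = (\<lambda>w. \<Sum>l\<le>k. (-1)^l * tpow k a l w)"
  have ytens: "y \<in> tens d k" unfolding y_def by (intro sum_tens tpow_tens atens)
  have yt: "trunc k y" using tens_trunc[OF ytens] .
  have sa: "s = (\<lambda>w. tone w + a w)" by (simp add: a)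
  have nil: "tpow k a (Suc k) w = 0" for w using tpow_nilpotent[of a k, OF a0] by (metis (no_types))
  have r: "tmul k s y = tone"
  proof -
    have "tmul k s y = (\<lambda>w. y w + (\<Sum>l\<le>k. (-1)^l * tpow k a (Suc l) w))"
      unfolding sa tmul_add_left tmul_tone_left[OF yt] unfolding y_def tmul_sum_right by simp
    also have "\<dots> = tone"
    proof (rule ext)
      fix w show "y w + (\<Sum>l\<le>k. (-1)^l * tpow k a (Suc l) w) = tone w"
        unfolding y_def telescope[of "\<lambda>l. tpow k a l w"] by (simp only: nil, simp add: tone_def)
    qed
    finally show ?thesis .
  qed
  have l: "tmul k y s = tone"
  proof -
    have "tmul k y s = (\<lambda>w. y w + (\<Sum>l\<le>k. (-1)^l * tpow k a (Suc l) w))"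
      unfolding sa tmul_add_right tmul_tone_right[OF yt] unfolding y_def tmul_sum_left
      by (simp add: tpow_comm[OF at])
    also have "\<dots> = tone"
    proof (rule ext)
      fix w show "y w + (\<Sum>l\<le>k. (-1)^l * tpow k a (Suc l) w) = tone w"
        unfolding y_def telescope[of "\<lambda>l. tpow k a l w"] by (simp only: nil, simp add: tone_def)
    qed
    finally show ?thesis .
  qed
  have "tinv d k s = y"
    unfolding tinv_def
  proof (rule the_equality)
    show "y \<in> tens d k \<and> tmul k s y = tone \<and> tmul k y s = tone" using ytens r l by simp
  next
    fix y' assume h: "y' \<in> tens d k \<and> tmul k s y' = tone \<and> tmul k y' s = tone"
    have "y' = tmul k y' tone" using tmul_tone_right[OF tens_trunc, of y' d k] h by simp
    also have "\<dots> = tmul k y' (tmul k s y)" using r by simp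
    also have "\<dots> = tmul k (tmul k y' s) y" by (simp add: tmul_assoc)
    also have "\<dots> = y" using h tmul_tone_left[OF yt] by simp
    finally show "y' = y" .
  qed
  moreover have "eval_poly k (\<lambda>u. - svar k u + gpoly k (\<lambda>l. (-1)^l) u) s = y"
    unfolding y_def a_def
    by (rule eval_generic[OF k, where \<sigma>="-1"]) auto
  ultimately show "eval_poly k (\<lambda>u. - svar k u + gpoly k (\<lambda>l. (-1)^l) u) s = tinv d k s" by simp
qed (rule gpoly_free)

theorem lemma3p3:
  fixes d k :: nat
  assumes "k \<ge> 1"
  shows "(\<exists>g \<in> free_alg (k - 1). \<forall>z \<in> lie_alg d k.
            eval_poly k (\<lambda>u. svar k u + g u) z = texp k z)
       \<and> (\<exists>g \<in> free_alg (k - 1). \<forall>s \<in> group_G d k.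
            eval_poly k (\<lambda>u. svar k u + g u) s = tlog k s)
       \<and> (\<exists>g \<in> free_alg (k - 1). \<forall>z \<in> group_G d k.
            eval_poly k (\<lambda>u. - svar k u + g u) z = tinv d k z)"
  using part1[OF assms] part2[OF assms] part3[OF assms] by blast

end
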